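(* There exists a constant $c$ such that $\alpha_k(m)\le m^c$ for all $k,m\in\mathbf N$.
   Context: For $k,m\in\mathbf N=\{1,2,\dots\}$, $\alpha_k(m)$ is the number of $k$-tuples $(m_1,\dots,m_k)$ of integers $m_i\ge2$ with $m_1m_2\cdots m_k=m$. *)

theory Defs
  imports Complex_Main
begin

definition alpha :: "nat \<Rightarrow> nat \<Rightarrow> nat" where
  "alpha k m = card {xs :: nat list. length xs = k \<and> (\<forall>x\<in>set xs. 2 \<le> x) \<and> prod_list xs = m}"

end

theory Submission
  imports Defs
begin

lemma telesc: "n \<ge> 1 \<Longrightarrow> (\<Sum>d=2..n. 1 / (real d * (real d - 1))) = 1 - 1 / real n"
proof (induction n rule: dec_induct)
  case base then show ?case by simp
next
  case (step n)
  have "{2..Suc n} = insert (Suc n) {2..n}" using step by auto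
  then have "(\<Sum>d=2..Suc n. 1 / (real d * (real d - 1))) = 1 / (real (Suc n) * real n) + (1 - 1/real n)"
    using step by simp
  also have "\<dots> = 1 - 1 / real (Suc n)" using step(1) by (simp add: field_simps add_nonneg_eq_0_iff)
  finally show ?case .
qed

lemma mem_dvd: "x \<in> set xs \<Longrightarrow> x dvd prod_list (xs::nat list)"
  by (induction xs) auto

lemma divsum: "(m::nat) \<ge> 1 \<Longrightarrow> (\<Sum>d=2..m. (m div d)^2) \<le> m^2"
proof -
  assume m: "m \<ge> 1"
  have "real (\<Sum>d=2..m. (m div d)^2) = (\<Sum>d=2..m. real (m div d)^2)" by simp
  also have "\<dots> \<le> (\<Sum>d=2..m. real m ^2 * (1 / (real d * (real d - 1))))"
  proof (rule sum_mono)
    fix d assume d: "d \<in> {2..m}"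
    have "(m div d) * d \<le> m" by (metis mod_div_mult_eq le_add2)
    hence "real (m div d) * real d \<le> real m" by (metis of_nat_le_iff of_nat_mult)
    hence "real (m div d) \<le> real m / real d" using d by (simp add: le_divide_eq)
    hence "real (m div d)^2 \<le> (real m / real d)^2" by (simp add: power_mono)
    also have "\<dots> = real m^2 / (real d * real d)" by (simp add: power2_eq_square)
    also have "\<dots> \<le> real m^2 / (real d * (real d - 1))"
      using d by (intro divide_left_mono) auto
    finally show "real (m div d)^2 \<le> real m ^2 * (1 / (real d * (real d - 1)))" by simp
  qed
  also have "\<dots> = real m^2 * (1 - 1 / real m)" by (subst sum_distrib_left[symmetric]) (simp only: telesc[OF m])
  also have "\<dots> \<le> real m ^2" using m by (simp add: mult_left_le)
  finally have "real (\<Sum>d=2..m. (m div d)^2) \<le> real (m^2)" by simp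
  thus ?thesis by (simp only: of_nat_le_iff)
qed

definition S :: "nat \<Rightarrow> nat \<Rightarrow> nat list set" where
  "S k m = {xs :: nat list. length xs = k \<and> (\<forall>x\<in>set xs. 2 \<le> x) \<and> prod_list xs = m}"

lemma S_Suc: "S (Suc k) m \<subseteq> (\<Union>d\<in>{d. d dvd m \<and> 2 \<le> d}. (\<lambda>xs. d # xs) ` S k (m div d))"
proof
  fix ys assume "ys \<in> S (Suc k) m"
  then obtain d xs where ys: "ys = d # xs" and l: "length xs = k" and a: "2 \<le> d" "\<forall>x\<in>set xs. 2 \<le> x"
    and p: "d * prod_list xs = m"
    unfolding S_def by (cases ys) auto
  have "m div d = prod_list xs" using p a by (metis nonzero_mult_div_cancel_left not_numeral_le_zero)
  show "ys \<in> (\<Union>d\<in>{d. d dvd m \<and> 2 \<le> d}. (\<lambda>xs. d # xs) ` S k (m div d))"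
  proof (rule UN_I[of d])
    show "d \<in> {d. d dvd m \<and> 2 \<le> d}" using p a by auto
    show "ys \<in> (\<lambda>xs. d # xs) ` S k (m div d)" using ys l a \<open>m div d = prod_list xs\<close> unfolding S_def by auto
  qed
qed

lemma S_fin: "n \<ge> 1 \<Longrightarrow> finite (S k n)"
proof -
  assume n: "n \<ge> 1"
  have "S k n \<subseteq> {xs. set xs \<subseteq> {..n} \<and> length xs = k}"
  proof
    fix xs assume "xs \<in> S k n"
    hence l: "length xs = k" and p: "prod_list xs = n" unfolding S_def by auto
    have "\<forall>x\<in>set xs. x \<le> n"
      using p n using mem_dvd dvd_imp_le by (metis not_one_le_zero gr0I)
    thus "xs \<in> {xs. set xs \<subseteq> {..n} \<and> length xs = k}" using l by auto
  qed
  thus ?thesis by (rule finite_subset) (rule finite_lists_length_eq, simp)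
qed

lemma main: "m \<ge> 1 \<Longrightarrow> card (S k m) \<le> m^2"
proof (induction k arbitrary: m)
  case 0
  have "S 0 m \<subseteq> {[]}" unfolding S_def by auto
  hence "card (S 0 m) \<le> 1" using card_mono[of "{[]}" "S 0 m"] by simp
  then show ?case using 0 by (meson le_trans one_le_power)
next
  case (Suc k)
  let ?D = "{d. d dvd m \<and> 2 \<le> d}"
  have Dsub: "?D \<subseteq> {2..m}" using Suc.prems by (auto dest: dvd_imp_le)
  have fin: "finite ?D" using Dsub finite_subset by blast
  have "card (S (Suc k) m) \<le> card (\<Union>d\<in>?D. (\<lambda>xs. d # xs) ` S k (m div d))"
  proof (rule card_mono[OF _ S_Suc])
    show "finite (\<Union>d\<in>?D. (\<lambda>xs. d # xs) ` S k (m div d))"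
      using fin Suc.prems by (intro finite_UN_I) (auto intro!: S_fin elim!: dvdE)
  qed
  also have "\<dots> \<le> (\<Sum>d\<in>?D. card ((\<lambda>xs. d # xs) ` S k (m div d)))"
    by (rule card_UN_le[OF fin])
  also have "\<dots> \<le> (\<Sum>d\<in>?D. (m div d)^2)"
  proof (rule sum_mono)
    fix d assume d: "d \<in> ?D"
    have "m div d \<ge> 1" using d Suc.prems by (auto elim!: dvdE)
    hence "card (S k (m div d)) \<le> (m div d)^2" by (rule Suc.IH)
    moreover have "card ((\<lambda>xs. d # xs) ` S k (m div d)) = card (S k (m div d))"
      by (rule card_image) (auto simp: inj_on_def)
    ultimately show "card ((\<lambda>xs. d # xs) ` S k (m div d)) \<le> (m div d)^2" by simp
  qed
  also have "\<dots> \<le> (\<Sum>d=2..m. (m div d)^2)" by (rule sum_mono2[OF _ Dsub]) auto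
  also have "\<dots> \<le> m^2" by (rule divsum[OF Suc.prems])
  finally show ?case .
qed

theorem lemma4p3:
  shows "\<exists>c::real. \<forall>k m :: nat. k \<ge> 1 \<longrightarrow> m \<ge> 1 \<longrightarrow> real (alpha k m) \<le> real m powr c"
proof (intro exI[of _ 2] allI impI)
  fix k m :: nat assume "k \<ge> 1" "m \<ge> 1"
  have "alpha k m \<le> m^2" using main[OF \<open>m \<ge> 1\<close>] unfolding alpha_def S_def .
  hence "real (alpha k m) \<le> real m ^ 2" by (metis of_nat_le_iff of_nat_power)
  also have "\<dots> = real m powr 2" using \<open>m \<ge> 1\<close> by (simp add: powr_realpow)
  finally show "real (alpha k m) \<le> real m powr 2" .
qed

end
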